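(* For any three continuous functions $f_1,f_2,f_3:\mathrm{SO}(3)\to S^3$, there exists a rotation $R\in\mathrm{SO}(3)$ such that $d(R,\mathbf{R}_Q(f_i(R)))=\pi$ for all $i\in\{1,2,3\}$.
   Context: $S^3$ is the set of unit quaternions, identifying $w+x\mathbf{i}+y\mathbf{j}+z\mathbf{k}$ with $(w,x,y,z)$. $\mathbf{R}_Q:S^3\to\mathrm{SO}(3)$ is the standard conversion $$\mathbf{R}_Q(w,x,y,z)=\begin{bmatrix}1-2y^2-2z^2 & 2(xy-zw) & 2(xz+yw)\\ 2(xy+zw) & 1-2x^2-2z^2 & 2(yz-xw)\\ 2(xz-yw) & 2(yz+xw) & 1-2x^2-2y^2\end{bmatrix}.$$ For $R_1,R_2\in\mathrm{SO}(3)$, $d(R_1,R_2)=\cos^{-1}\frac{\mathrm{tr}(R_2R_1^{-1})-1}{2}$ is the angle of the rotation $R_2R_1^{-1}$. *)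

theory Defs
  imports "HOL-Analysis.Analysis"
begin

definition SO3 :: "(real^3^3) set" where
  "SO3 = {R. rotation_matrix R}"

text \<open>Unit quaternions w + x i + y j + z k, identified with (w,x,y,z) in R^4,
  components indexed 1,2,3,4.\<close>
definition S3 :: "(real^4) set" where
  "S3 = sphere 0 1"

definition RQ :: "real^4 \<Rightarrow> real^3^3" where
  "RQ q = (let w = q$1; x = q$2; y = q$3; z = q$4 in
     vector [vector [1 - 2*y^2 - 2*z^2, 2*(x*y - z*w), 2*(x*z + y*w)],
             vector [2*(x*y + z*w), 1 - 2*x^2 - 2*z^2, 2*(y*z - x*w)],
             vector [2*(x*z - y*w), 2*(y*z + x*w), 1 - 2*x^2 - 2*y^2]])"

text \<open>Angle of the rotation R2 R1^{-1}.\<close>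
definition rot_dist :: "real^3^3 \<Rightarrow> real^3^3 \<Rightarrow> real" where
  "rot_dist R1 R2 = arccos ((trace (R2 ** matrix_inv R1) - 1) / 2)"

end

theory Submission
  imports Defs "HOL-Homology.Invariance_of_Domain"
begin


lemma RQ_nth:
  "RQ q $ 1 $ 1 = 1 - 2*(q$3)^2 - 2*(q$4)^2"
  "RQ q $ 1 $ 2 = 2*(q$2*q$3 - q$4*q$1)"
  "RQ q $ 1 $ 3 = 2*(q$2*q$4 + q$3*q$1)"
  "RQ q $ 2 $ 1 = 2*(q$2*q$3 + q$4*q$1)"
  "RQ q $ 2 $ 2 = 1 - 2*(q$2)^2 - 2*(q$4)^2"
  "RQ q $ 2 $ 3 = 2*(q$3*q$4 - q$2*q$1)"
  "RQ q $ 3 $ 1 = 2*(q$2*q$4 - q$3*q$1)"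
  "RQ q $ 3 $ 2 = 2*(q$3*q$4 + q$2*q$1)"
  "RQ q $ 3 $ 3 = 1 - 2*(q$2)^2 - 2*(q$3)^2"
  by (simp_all add: RQ_def Let_def)

lemma norm1_4: "norm (q::real^4) = 1 \<Longrightarrow> (q$1)^2 + (q$2)^2 + (q$3)^2 + (q$4)^2 = 1"
  by (simp add: norm_eq_1 inner_vec_def sum_4 power2_eq_square)

lemma RQ_orth: assumes "norm q = 1" shows "transpose (RQ q) ** RQ q = mat 1"
proof -
  have h: "(q$1)^2 + (q$2)^2 + (q$3)^2 + (q$4)^2 = 1" using norm1_4 assms .
  show ?thesis
    unfolding vec_eq_iff forall_3 matrix_matrix_mult_def transpose_def mat_def
    using h by (simp add: sum_3 RQ_nth; Groebner_Basis.algebra)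
qed

lemma RQ_det: assumes "norm q = 1" shows "det (RQ q) = 1"
proof -
  have h: "(q$1)^2 + (q$2)^2 + (q$3)^2 + (q$4)^2 = 1" using norm1_4 assms .
  show ?thesis
    using h by (simp add: det_3 RQ_nth; Groebner_Basis.algebra)
qed



lemma RQ_trace: assumes "norm q = 1" "norm p = 1"
  shows "trace (RQ q ** transpose (RQ p)) = 4 * (q \<bullet> p)^2 - 1"
proof -
  have h: "(q$1)^2 + (q$2)^2 + (q$3)^2 + (q$4)^2 = 1" using norm1_4 assms(1) .
  have h2: "(p$1)^2 + (p$2)^2 + (p$3)^2 + (p$4)^2 = 1" using norm1_4 assms(2) .
  show ?thesis
    unfolding trace_def matrix_matrix_mult_def transpose_def inner_vec_def
    using h h2 by (simp add: sum_3 sum_4 RQ_nth; Groebner_Basis.algebra)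
qed

lemma RQ_neg: "RQ (-q) = RQ q"
  by (simp add: RQ_def Let_def power2_eq_square)

lemma orth_inv: fixes Q :: "real^3^3" assumes "transpose Q ** Q = mat 1"
  shows "matrix_inv Q = transpose Q"
proof -
  have o: "orthogonal_matrix Q" using assms orthogonal_matrix by blast
  then have "Q ** transpose Q = mat 1" by (simp add: orthogonal_matrix_def)
  then have ex: "\<exists>A'. Q ** A' = mat 1 \<and> A' ** Q = mat 1" using assms by blast
  have "Q ** matrix_inv Q = mat 1 \<and> matrix_inv Q ** Q = mat 1"
    unfolding matrix_inv_def using someI_ex[OF ex] by simp
  then have "matrix_inv Q = matrix_inv Q ** (Q ** transpose Q)"
    using \<open>Q ** transpose Q = mat 1\<close> by (simp add: matrix_mul_rid)
  also have "\<dots> = (matrix_inv Q ** Q) ** transpose Q" by (simp add: matrix_mul_assoc)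
  finally show ?thesis using \<open>Q ** matrix_inv Q = mat 1 \<and> matrix_inv Q ** Q = mat 1\<close> by (simp add: matrix_mul_lid)
qed



lemma topspace_nsphere_eq: "topspace (nsphere n) = {x. (\<Sum>i\<le>n. (x i)^2) = 1 \<and> (\<forall>i>n. x i = 0)}"
  by (simp add: nsphere)

lemma continuous_map_vec_lambda4:
  assumes "\<And>j. continuous_map X euclideanreal (g j)"
  shows "continuous_map X euclidean (\<lambda>x. (\<chi> j. g j x) :: real^'n)"
  using assms unfolding continuous_map_atin by (auto intro: tendsto_vec_lambda)

lemma continuous_map_vec_nth':
  assumes "continuous_map X euclidean (f :: _ \<Rightarrow> real^'n)"
  shows "continuous_map X euclideanreal (\<lambda>x. f x $ i)"
  using assms unfolding continuous_map_atin by (auto intro: tendsto_vec_nth)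

definition toR4 :: "(nat \<Rightarrow> real) \<Rightarrow> real^4" where
  "toR4 x = (\<chi> j. if j = 1 then x 0 else if j = 2 then x 1 else if j = 3 then x 2 else x 3)"

lemma toR4_nth [simp]: "toR4 x $ 1 = x 0" "toR4 x $ 2 = x 1" "toR4 x $ 3 = x 2" "toR4 x $ 4 = x 3"
  by (simp_all add: toR4_def)

lemma toR4_neg: "toR4 (\<lambda>i. - x i) = - toR4 x"
  by (simp add: vec_eq_iff forall_4)


lemma continuous_map_toR4: "continuous_map (powertop_real UNIV) euclidean toR4"
  unfolding toR4_def
  apply (rule continuous_map_vec_lambda4)
  subgoal for j
    using continuous_map_product_projection[OF UNIV_I, of "\<lambda>_. euclideanreal"]
    by (cases "j = 1"; cases "j = 2"; cases "j = 3"; simp)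
  done

lemma sum_atMost3: "(\<Sum>i\<le>(3::nat). f i) = f 0 + f 1 + f 2 + (f 3 :: real)"
  by (simp add: numeral_3_eq_3 numeral_2_eq_2 add.assoc)
lemma sum_atMost2: "(\<Sum>i\<le>(2::nat). f i) = f 0 + f 1 + (f 2 :: real)"
  by (simp add: numeral_2_eq_2 add.assoc)
lemma sum_atMost1: "(\<Sum>i\<le>(1::nat). f i) = f 0 + (f 1 :: real)"
  by simp

lemma norm_toR4: "x \<in> topspace (nsphere 3) \<Longrightarrow> norm (toR4 x) = 1"
  by (simp add: topspace_nsphere_eq norm_eq_1 inner_vec_def sum_4 sum_atMost3 power2_eq_square add.assoc)



lemma nsphere_top_mono: assumes "k \<le> n" shows "topspace (nsphere k) \<subseteq> topspace (nsphere n)"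
proof
  fix x assume x: "x \<in> topspace (nsphere k)"
  have "(\<Sum>i\<le>n. (x i)^2) = (\<Sum>i\<le>k. (x i)^2)"
    using x assms by (intro sum.mono_neutral_right) (auto simp: topspace_nsphere_eq)
  then show "x \<in> topspace (nsphere n)" using x assms by (auto simp: topspace_nsphere_eq)
qed

lemma nsphere_sub: assumes "k \<le> n" shows "nsphere k = subtopology (nsphere n) (topspace (nsphere k))"
proof -
  have "topspace (nsphere n) \<inter> topspace (nsphere k) = topspace (nsphere k)"
    using nsphere_top_mono[OF assms] by blast
  then show ?thesis
    by (metis nsphere subtopology_subtopology topspace_nsphere_eq)
qed

lemma cont_restrict:
  assumes "continuous_map (nsphere n) (nsphere n) f" "k \<le> n"
    "f \<in> topspace (nsphere k) \<rightarrow> topspace (nsphere k)"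
  shows "continuous_map (nsphere k) (nsphere k) f"
proof -
  have "continuous_map (nsphere k) (nsphere n) f"
    using continuous_map_from_subtopology[OF assms(1)] nsphere_sub[OF assms(2)] by metis
  then show ?thesis
    using assms(3) continuous_map_in_subtopology nsphere_sub[OF assms(2)] by metis
qed

lemma BU_flag:
  fixes G :: "real^4 \<Rightarrow> real^3"
  assumes cont: "continuous_on (sphere 0 1) G"
    and nz: "\<And>x. x \<in> sphere 0 1 \<Longrightarrow> G x \<noteq> 0"
    and odd: "\<And>x. x \<in> sphere 0 1 \<Longrightarrow> G (-x) = - G x"
    and circ: "\<And>x. x \<in> sphere 0 1 \<Longrightarrow> x$3 = 0 \<Longrightarrow> x$4 = 0 \<Longrightarrow> G x $ 3 = 0"
    and e2: "G (axis 1 1) $ 2 = 0" and e3: "G (axis 1 1) $ 3 = 0" and e1: "G (axis 1 1) $ 1 > 0"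
  shows False
proof -
  define N where "N y = (1 / norm (G y)) *\<^sub>R G y" for y
  define H where "H x = (\<lambda>i::nat. if i = 0 then N (toR4 x) $ 1 else if i = 1 then N (toR4 x) $ 2
     else if i = 2 then N (toR4 x) $ 3 else 0)" for x
  have Nn: "norm (N y) = 1" if "y \<in> sphere 0 1" for y
    using nz[OF that] by (simp add: N_def)
  have Nsq: "(N y $ 1)^2 + (N y $ 2)^2 + (N y $ 3)^2 = 1" if "y \<in> sphere 0 1" for y
    using Nn[OF that] by (simp add: norm_eq_1 inner_vec_def sum_3 power2_eq_square)
  have Nodd: "N (-y) = - N y" if "y \<in> sphere 0 1" for y
    using odd[OF that] by (simp add: N_def)
  have contN: "continuous_on (sphere 0 1) N"
    unfolding N_def using cont nz by (intro continuous_intros) auto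
  have toS: "toR4 x \<in> sphere 0 1" if "x \<in> topspace (nsphere 3)" for x
    using norm_toR4[OF that] by simp
  have cN: "continuous_map (nsphere 3) euclidean (\<lambda>x. N (toR4 x))"
  proof -
    have "continuous_map (nsphere 3) euclidean toR4"
      unfolding nsphere by (rule continuous_map_from_subtopology[OF continuous_map_toR4])
    then have "continuous_map (nsphere 3) (top_of_set (sphere 0 1)) toR4"
      using toS by (auto simp: continuous_map_in_subtopology)
    moreover have "continuous_map (top_of_set (sphere 0 1)) euclidean N"
      using contN by simp
    ultimately show ?thesis using continuous_map_compose[of _ _ toR4 _ N] by (simp add: o_def)
  qed
  have cH: "continuous_map (nsphere 3) (powertop_real UNIV) H"
    unfolding continuous_map_componentwise_UNIV
  proof
    fix k
    show "continuous_map (nsphere 3) euclideanreal (\<lambda>x. H x k)"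
      unfolding H_def using continuous_map_vec_nth'[OF cN]
      by (cases "k = 0"; cases "k = 1"; cases "k = 2"; simp)
  qed
  have HS2: "H x \<in> topspace (nsphere 2)" if "x \<in> topspace (nsphere 3)" for x
    using Nsq[OF toS[OF that]] by (simp add: topspace_nsphere_eq sum_atMost2 H_def)
  have S23: "topspace (nsphere 2) \<subseteq> topspace (nsphere 3)" by (rule nsphere_top_mono) simp
  have cH3: "continuous_map (nsphere 3) (nsphere 3) H"
    using cH HS2 S23 by (subst (2) nsphere) (auto simp: continuous_map_in_subtopology topspace_nsphere_eq[symmetric])
  have Hodd: "H (\<lambda>i. - u i) = (\<lambda>i. - H u i)" if "u \<in> topspace (nsphere 3)" for u
    using Nodd[OF toS[OF that]] by (simp add: H_def toR4_neg fun_eq_iff)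
  have HS1: "H x \<in> topspace (nsphere 1)" if "x \<in> topspace (nsphere 1)" for x
  proof -
    have x3: "x \<in> topspace (nsphere 3)" using that nsphere_top_mono[of 1 3] by auto
    have "x 2 = 0" "x 3 = 0" using that by (auto simp: topspace_nsphere_eq)
    then have "G (toR4 x) $ 3 = 0" using circ[OF toS[OF x3]] by simp
    then have "H x 2 = 0" by (simp add: H_def N_def)
    then show ?thesis using HS2[OF x3] by (auto simp: topspace_nsphere_eq sum_atMost2 sum_atMost1 H_def)
  qed
  have HS0: "H x = x" if "x \<in> topspace (nsphere 0)" for x
  proof -
    have x0: "(x 0)^2 = 1" "\<And>i. i > 0 \<Longrightarrow> x i = 0" using that by (auto simp: topspace_nsphere_eq)
    then have t: "toR4 x = x 0 *\<^sub>R axis 1 1" by (simp add: vec_eq_iff forall_4 axis_def)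
    have x3: "x \<in> topspace (nsphere 3)" using that nsphere_top_mono[of 0 3] by auto
    have ax: "axis 1 (1::real) \<in> sphere (0::real^4) 1" by simp
    have Gax: "G (axis 1 1) = G (axis 1 1) $ 1 *\<^sub>R axis 1 1"
      using e2 e3 by (simp add: vec_eq_iff forall_3 axis_def)
    have nG: "norm (G (axis 1 1)) = G (axis 1 1) $ 1"
      using e1 by (subst Gax) simp
    have Nax: "N (axis 1 1) = axis 1 1"
      using e1 by (simp add: N_def nG) (subst Gax, simp)
    have "x 0 = 1 \<or> x 0 = -1" using x0(1) by (simp add: power2_eq_1_iff)
    then have "N (toR4 x) = x 0 *\<^sub>R axis 1 1"
      using Nax Nodd[OF ax] t by auto
    then show ?thesis using x0(2) by (auto simp: H_def fun_eq_iff axis_def)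
  qed
  have S13: "topspace (nsphere 1) \<subseteq> topspace (nsphere 3)" by (rule nsphere_top_mono) simp
  have S03: "topspace (nsphere 0) \<subseteq> topspace (nsphere 3)" by (rule nsphere_top_mono) simp
  have cH2: "continuous_map (nsphere 2) (nsphere 2) H"
    using cont_restrict[OF cH3, of 2] HS2 S23 by auto
  have cH1: "continuous_map (nsphere 1) (nsphere 1) H"
    using cont_restrict[OF cH3, of 1] HS1 by auto
  have d3: "even (Brouwer_degree2 3 H - Brouwer_degree2 2 H)"
  proof -
    have "H \<in> topspace (nsphere (3 - Suc 0)) \<rightarrow> topspace (nsphere (3 - Suc 0))"
      using HS2 S23 by (auto simp: numeral_3_eq_3 numeral_2_eq_2)
    then show ?thesis
      using Borsuk_odd_mapping_degree_step[OF cH3] Hodd by (auto simp: o_def numeral_3_eq_3 numeral_2_eq_2)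
  qed
  have d2: "even (Brouwer_degree2 2 H - Brouwer_degree2 1 H)"
    using Borsuk_odd_mapping_degree_step[OF cH2] Hodd HS1 S23 by (auto simp: o_def numeral_2_eq_2)
  have d1: "even (Brouwer_degree2 1 H - Brouwer_degree2 0 H)"
    using Borsuk_odd_mapping_degree_step[OF cH1] Hodd HS0 S13 by (auto simp: o_def)
  have "Brouwer_degree2 0 H = Brouwer_degree2 0 id"
    using HS0 by (intro Brouwer_degree2_eq) simp
  then have d0: "Brouwer_degree2 0 H = 1" by simp
  have "(\<lambda>i. if i = 3 then 1 else 0) \<in> topspace (nsphere 3)"
    by (simp add: topspace_nsphere_eq sum_atMost3)
  moreover have "(\<lambda>i. if i = 3 then 1 else 0) \<notin> H ` topspace (nsphere 3)"
  proof
    assume "(\<lambda>i. if i = 3 then 1 else 0) \<in> H ` topspace (nsphere 3)"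
    then obtain x where "(\<lambda>i::nat. if i = 3 then 1 else 0::real) = H x" by blast
    then have "(\<lambda>i::nat. if i = 3 then 1 else 0::real) 3 = H x 3" by (rule fun_cong)
    then show False by (simp add: H_def)
  qed
  ultimately have "H ` topspace (nsphere 3) \<noteq> topspace (nsphere 3)" by blast
  then have "Brouwer_degree2 3 H = 0" using Brouwer_degree2_nonsurjective[OF cH3] by blast
  moreover have "\<And>a b c d::int. d = 0 \<Longrightarrow> a = 1 \<Longrightarrow> even (b - a) \<Longrightarrow> even (c - b) \<Longrightarrow> even (d - c) \<Longrightarrow> False"
    by presburger
  ultimately show False using d0 d1 d2 d3 by blast
qed



lemma sphere4_sq: "x \<in> sphere (0::real^4) 1 \<Longrightarrow> (x$1)^2 + (x$2)^2 + (x$3)^2 + (x$4)^2 = 1"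
  by (simp add: norm_eq_1 inner_vec_def sum_4 power2_eq_square)

lemma flag_construct:
  fixes P :: "real^4 \<Rightarrow> real^3"
  assumes diff: "\<And>x. P differentiable (at x)"
    and odd: "\<And>x. P (-x) = - P x"
    and nz: "\<And>x. x \<in> sphere 0 1 \<Longrightarrow> P x \<noteq> 0"
  shows False
proof -
  define e1 :: "real^4" where "e1 = axis 1 1"
  define e2 :: "real^4" where "e2 = axis 2 1"
  define c where "c \<theta> = cos \<theta> *\<^sub>R e1 + sin \<theta> *\<^sub>R e2" for \<theta>
  define K where "K z = fst z *\<^sub>R P (c (snd z))" for z :: "real \<times> real"
  have dK: "K differentiable_on UNIV"
  proof -
    have "K differentiable (at z)" for z
    proof -
      have dcos: "cos differentiable (at t)" "sin differentiable (at t)" for t :: real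
        using DERIV_cos DERIV_sin has_field_derivative_imp_has_derivative differentiable_def by blast+
      have dc1: "c differentiable (at t)" for t
        unfolding c_def by (intro differentiable_add differentiable_scaleR dcos differentiable_const)
      have "snd differentiable (at z)"
        by (rule bounded_linear_imp_differentiable[OF bounded_linear_snd])
      then have dc: "(\<lambda>z::real\<times>real. c (snd z)) differentiable (at z)"
        using differentiable_chain_at[OF _ dc1] by (simp add: o_def)
      have "(\<lambda>z. P (c (snd z))) differentiable (at z)"
        using differentiable_chain_at[OF dc diff] by (simp add: o_def)
      then show ?thesis unfolding K_def
        by (intro differentiable_scaleR) (auto intro: bounded_linear_imp_differentiable bounded_linear_fst)
    qed
    then show ?thesis by (simp add: differentiable_at_imp_differentiable_on)
  qed
  have negK: "negligible (range K)"
    by (rule negligible_differentiable_image_lowdim) (simp_all add: dK)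
  have "negligible (range K \<union> {x. x$3 = 0})"
    using negK negligible_standard_hyperplane_cart by (rule negligible_Un)
  then have "range K \<union> {x. x$3 = 0} \<noteq> UNIV" by (metis non_negligible_UNIV)
  then obtain v where v: "v \<notin> range K" "v$3 \<noteq> 0" by blast
  have noC: "P x \<noteq> t *\<^sub>R v" if x: "x \<in> sphere 0 1" "x$3 = 0" "x$4 = 0" for x t
  proof
    assume eq: "P x = t *\<^sub>R v"
    have "(x$1)^2 + (x$2)^2 = 1" using sphere4_sq[OF x(1)] x by simp
    then obtain \<theta> where th: "x$1 = cos \<theta>" "x$2 = sin \<theta>" by (rule sincos_total_2pi)
    then have xc: "x = c \<theta>" using x by (simp add: vec_eq_iff forall_4 c_def e1_def e2_def axis_def)
    have "t \<noteq> 0" using nz[OF x(1)] eq by auto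
    then have "v = K (1/t, \<theta>)" by (simp add: K_def eq flip: xc)
    then show False using v(1) by auto
  qed
  have vv: "v \<bullet> v \<noteq> 0" using v(2) by (auto simp: inner_eq_zero_iff)
  define r where "r x = P x - ((P x \<bullet> v) / (v \<bullet> v)) *\<^sub>R v" for x
  have r0: "r x = 0 \<Longrightarrow> P x = ((P x \<bullet> v) / (v \<bullet> v)) *\<^sub>R v" for x by (simp add: r_def)
  have rpar: "r x = 0" if "P x = s *\<^sub>R v" for x s using vv that by (simp add: r_def)
  define m where "m x = norm (r x)^2 + ((x$3)^2 + (x$4)^2)" for x
  have contP: "continuous_on UNIV P"
    using diff by (simp add: differentiable_imp_continuous_within continuous_at_imp_continuous_on)
  have contm: "continuous_on (sphere 0 1) m"
    unfolding m_def r_def using v(2)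
    by (intro continuous_intros continuous_on_subset[OF contP]) auto
  have mpos: "m x > 0" if "x \<in> sphere 0 1" for x
  proof (cases "(x$3)^2 + (x$4)^2 > 0")
    case True then show ?thesis by (simp add: m_def add_nonneg_pos)
  next
    case False
    then have "x$3 = 0" "x$4 = 0" by (smt (verit) zero_le_power2 power2_less_eq_zero_iff)+
    then have "r x \<noteq> 0" using noC[OF that] r0 by metis
    then show ?thesis using \<open>x$3 = 0\<close> \<open>x$4 = 0\<close> by (simp add: m_def)
  qed
  have e1S_pre: "e1 \<in> sphere 0 1" by (simp add: e1_def)
  obtain x0 where x0: "x0 \<in> sphere 0 1" "\<And>y. y \<in> sphere 0 1 \<Longrightarrow> m x0 \<le> m y"
  proof -
    have "sphere (0::real^4) 1 \<noteq> {}" using e1S_pre by blast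
    then show ?thesis using continuous_attains_inf[OF compact_sphere _ contm] that by blast
  qed
  define \<mu> where "\<mu> = m x0"
  have mu: "\<mu> > 0" using mpos[OF x0(1)] by (simp add: \<mu>_def)
  define \<phi> where "\<phi> x = max 0 (1 - ((x$3)^2 + (x$4)^2) / \<mu>)" for x :: "real^4"
  define G0 where "G0 x = P x - (\<phi> x * (P x $ 3) / v$3) *\<^sub>R v" for x
  have contG0: "continuous_on (sphere 0 1) G0"
    unfolding G0_def \<phi>_def using mu v(2)
    by (intro continuous_intros continuous_on_subset[OF contP]) auto
  have G0odd: "G0 (-x) = - G0 x" for x
    by (simp add: G0_def \<phi>_def odd algebra_simps)
  have G0nz: "G0 x \<noteq> 0" if x: "x \<in> sphere 0 1" for x
  proof
    assume z: "G0 x = 0"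
    show False
    proof (cases "\<phi> x > 0")
      case True
      then have "0 < 1 - ((x$3)^2 + (x$4)^2) / \<mu>" by (simp add: \<phi>_def)
      then have "(x$3)^2 + (x$4)^2 < \<mu>" using mu by (simp add: field_simps)
      then have "norm (r x)^2 > 0" using x0(2)[OF x] unfolding m_def \<mu>_def by linarith
      moreover have "P x = (\<phi> x * (P x $ 3) / v$3) *\<^sub>R v" using z by (simp add: G0_def)
      ultimately show False using rpar by fastforce
    next
      case False
      then have "\<phi> x = 0" by (simp add: \<phi>_def)
      then show False using z nz[OF x] by (simp add: G0_def)
    qed
  qed
  have G0circ: "G0 x $ 3 = 0" if "x$3 = 0" "x$4 = 0" for x
    using that v(2) by (simp add: G0_def \<phi>_def)
  define a where "a = G0 e1"
  have e1S: "e1 \<in> sphere 0 1" by (simp add: e1_def)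
  have a3: "a$3 = 0" unfolding a_def by (rule G0circ) (simp_all add: e1_def axis_def)
  have anz: "a \<noteq> 0" using G0nz[OF e1S] by (simp add: a_def)
  have a12: "(a$1)^2 + (a$2)^2 > 0"
  proof -
    have "a$1 \<noteq> 0 \<or> a$2 \<noteq> 0" using anz a3 by (auto simp: vec_eq_iff forall_3)
    then show ?thesis by (auto simp: add_pos_nonneg add_nonneg_pos)
  qed
  define A where "A y = (a$1 * y$1 + a$2 * y$2) *\<^sub>R axis 1 1 + (a$1 * y$2 - a$2 * y$1) *\<^sub>R axis 2 1 + (y$3) *\<^sub>R (axis 3 1 :: real^3)" for y :: "real^3"
  have A1: "A y $ 1 = a$1 * y$1 + a$2 * y$2" and A2: "A y $ 2 = a$1 * y$2 - a$2 * y$1" and A3: "A y $ 3 = y$3" for y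
    by (simp_all add: A_def axis_def)
  have Anz: "A y \<noteq> 0" if "y \<noteq> 0" for y
  proof
    assume "A y = 0"
    then have h: "a$1 * y$1 + a$2 * y$2 = 0" "a$1 * y$2 - a$2 * y$1 = 0" "y$3 = 0"
      using A1 A2 A3 by (metis zero_index)+
    have "((a$1)^2 + (a$2)^2) * y$1 = a$1 * (a$1 * y$1 + a$2 * y$2) - a$2 * (a$1 * y$2 - a$2 * y$1)"
      "((a$1)^2 + (a$2)^2) * y$2 = a$2 * (a$1 * y$1 + a$2 * y$2) + a$1 * (a$1 * y$2 - a$2 * y$1)"
      by (simp_all add: algebra_simps power2_eq_square)
    then have "((a$1)^2 + (a$2)^2) * y$1 = 0" "((a$1)^2 + (a$2)^2) * y$2 = 0"
      using h by simp_all
    then have "y$1 = 0" "y$2 = 0" using a12 by auto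
    then show False using that h(3) by (auto simp: vec_eq_iff forall_3)
  qed
  have Aodd: "A (-y) = - A y" for y by (simp add: A_def algebra_simps)
  show False
  proof (rule BU_flag[of "\<lambda>x. A (G0 x)"])
    show "continuous_on (sphere 0 1) (\<lambda>x. A (G0 x))"
      unfolding A_def by (intro continuous_intros contG0)
    show "\<And>x. x \<in> sphere 0 1 \<Longrightarrow> A (G0 x) \<noteq> 0" using Anz G0nz by blast
    show "\<And>x. x \<in> sphere 0 1 \<Longrightarrow> A (G0 (- x)) = - A (G0 x)" using Aodd G0odd by simp
    show "\<And>x. x \<in> sphere 0 1 \<Longrightarrow> x $ 3 = 0 \<Longrightarrow> x $ 4 = 0 \<Longrightarrow> A (G0 x) $ 3 = 0"
      using G0circ A3 by simp
    show "A (G0 (axis 1 1)) $ 2 = 0" using A2 by (simp add: a_def[symmetric] e1_def[symmetric] mult.commute)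
    show "A (G0 (axis 1 1)) $ 3 = 0" using A3 a3 by (simp add: a_def[symmetric] e1_def[symmetric])
    show "A (G0 (axis 1 1)) $ 1 > 0" using A1 a12 by (simp add: a_def[symmetric] e1_def[symmetric] power2_eq_square)
  qed
qed



lemma BU: fixes F :: "real^4 \<Rightarrow> real^3"
  assumes cont: "continuous_on (sphere 0 1) F" and odd: "\<And>x. x \<in> sphere 0 1 \<Longrightarrow> F (-x) = - F x"
  shows "\<exists>x\<in>sphere 0 1. F x = 0"
proof (rule ccontr)
  assume "\<not> ?thesis"
  then have nz: "\<And>x. x \<in> sphere 0 1 \<Longrightarrow> F x \<noteq> 0" by blast
  have ne: "sphere (0::real^4) 1 \<noteq> {}" using norm_axis_1[of "1::4"]
    by (metis mem_sphere_0 empty_iff)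
  have cn: "continuous_on (sphere 0 1) (\<lambda>x. norm (F x))" by (intro continuous_intros cont)
  obtain x1 where x1: "x1 \<in> sphere 0 1" "\<And>y. y \<in> sphere 0 1 \<Longrightarrow> norm (F x1) \<le> norm (F y)"
    using continuous_attains_inf[OF compact_sphere ne cn] by blast
  define \<delta> where "\<delta> = norm (F x1)"
  have dpos: "\<delta> > 0" using nz[OF x1(1)] by (simp add: \<delta>_def)
  obtain p where p: "polynomial_function p" "\<And>x. x \<in> sphere 0 1 \<Longrightarrow> norm (F x - p x) < \<delta>/2"
    using Stone_Weierstrass_polynomial_function[OF compact_sphere cont, of "\<delta>/2"] dpos by auto
  define P where "P x = (1/2) *\<^sub>R (p x - p (-x))" for x
  have dp: "p differentiable (at x)" for x by (rule differentiable_at_polynomial_function[OF p(1)])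
  have dP: "P differentiable (at x)" for x
  proof -
    have "uminus differentiable (at x)"
      by (rule bounded_linear_imp_differentiable[OF bounded_linear_minus[OF bounded_linear_ident]])
    then have "(p \<circ> uminus) differentiable (at x)"
      by (rule differentiable_chain_at[OF _ dp])
    then have "(\<lambda>x. p (-x)) differentiable (at x)" by (simp add: o_def)
    then show ?thesis unfolding P_def
      by (intro differentiable_scaleR differentiable_diff dp differentiable_const)
  qed
  have Podd: "P (-x) = - P x" for x by (simp add: P_def algebra_simps)
  have Pnz: "P x \<noteq> 0" if x: "x \<in> sphere 0 1" for x
  proof
    assume P0: "P x = 0"
    have mx: "-x \<in> sphere 0 1" using x by simp
    have "F x - P x = (1/2) *\<^sub>R ((F x - p x) - (F (-x) - p (-x)))"
      using odd[OF x] by (simp add: P_def vec_eq_iff algebra_simps)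
    then have "norm (F x - P x) \<le> (1/2) * (norm (F x - p x) + norm (F (-x) - p (-x)))"
      using norm_triangle_ineq4[of "F x - p x" "F (-x) - p (-x)"] by simp
    also have "\<dots> < \<delta>/2" using p(2)[OF x] p(2)[OF mx] by simp
    finally have "norm (F x) < \<delta>/2" using P0 by simp
    then show False using x1(2)[OF x] dpos unfolding \<delta>_def by linarith
  qed
  show False by (rule flag_construct[OF dP Podd Pnz])
qed



lemma vector3_eq: "(vector [a,b,c] :: real^3) = (\<chi> i. if i = 1 then a else if i = 2 then b else c)"
  by (simp add: vec_eq_iff forall_3)

lemma RQ_eq: "RQ q = (\<chi> i j. if i = 1 then (if j = 1 then 1 - 2*(q$3)^2 - 2*(q$4)^2 else if j = 2 then 2*(q$2*q$3 - q$4*q$1) else 2*(q$2*q$4 + q$3*q$1))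
   else if i = 2 then (if j = 1 then 2*(q$2*q$3 + q$4*q$1) else if j = 2 then 1 - 2*(q$2)^2 - 2*(q$4)^2 else 2*(q$3*q$4 - q$2*q$1))
   else (if j = 1 then 2*(q$2*q$4 - q$3*q$1) else if j = 2 then 2*(q$3*q$4 + q$2*q$1) else 1 - 2*(q$2)^2 - 2*(q$3)^2))"
  by (simp add: vec_eq_iff forall_3 RQ_nth)

lemma continuous_RQ: "continuous_on S RQ"
  unfolding RQ_eq
  apply (intro continuous_on_vec_lambda)
  subgoal for i j by (cases "i = 1"; cases "i = 2"; cases "j = 1"; cases "j = 2"; simp; intro continuous_intros)
  done

theorem theorem5:
  fixes f1 f2 f3 :: "real^3^3 \<Rightarrow> real^4"
  assumes "continuous_on SO3 f1" and "f1 ` SO3 \<subseteq> S3"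
      and "continuous_on SO3 f2" and "f2 ` SO3 \<subseteq> S3"
      and "continuous_on SO3 f3" and "f3 ` SO3 \<subseteq> S3"
  shows "\<exists>R\<in>SO3. rot_dist R (RQ (f1 R)) = pi \<and> rot_dist R (RQ (f2 R)) = pi
                 \<and> rot_dist R (RQ (f3 R)) = pi"
proof -
  have RQS: "RQ ` sphere 0 1 \<subseteq> SO3"
    using RQ_orth RQ_det by (auto simp: SO3_def rotation_matrix_def orthogonal_matrix)
  have cf: "continuous_on (sphere 0 1) (\<lambda>p. f (RQ p))" if "continuous_on SO3 f" for f :: "real^3^3 \<Rightarrow> real^4"
    by (rule continuous_on_compose2[OF that continuous_RQ RQS])
  define F where "F p = (vector [p \<bullet> f1 (RQ p), p \<bullet> f2 (RQ p), p \<bullet> f3 (RQ p)] :: real^3)" for p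
  have "continuous_on (sphere 0 1) F"
    unfolding F_def vector3_eq
    apply (intro continuous_on_vec_lambda)
    subgoal for i by (cases "i = 1"; cases "i = 2"; simp; intro continuous_intros cf assms)
    done
  moreover have "F (-x) = - F x" for x
    by (simp add: F_def RQ_neg vec_eq_iff forall_3)
  ultimately obtain p where p: "p \<in> sphere 0 1" "F p = 0" using BU by blast
  have key: "rot_dist (RQ p) (RQ (f (RQ p))) = pi" if "f ` SO3 \<subseteq> S3" "p \<bullet> f (RQ p) = 0" for f
  proof -
    have "RQ p \<in> SO3" using RQS p(1) by blast
    then have "f (RQ p) \<in> S3" using that(1) by blast
    then have n: "norm (f (RQ p)) = 1" by (simp add: S3_def)
    have np: "norm p = 1" using p(1) by simp
    have "trace (RQ (f (RQ p)) ** matrix_inv (RQ p)) = -1"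
      using RQ_trace[OF n np] orth_inv[OF RQ_orth[OF np]] that(2) by (simp add: inner_commute)
    then show ?thesis by (simp add: rot_dist_def)
  qed
  have z: "p \<bullet> f1 (RQ p) = 0" "p \<bullet> f2 (RQ p) = 0" "p \<bullet> f3 (RQ p) = 0"
    using p(2) by (simp_all add: F_def vec_eq_iff forall_3)
  show ?thesis
    using key[OF assms(2) z(1)] key[OF assms(4) z(2)] key[OF assms(6) z(3)] RQS p(1) by blast
qed

end
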